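(* Let $F$ be a $\Theta$-graph of order $\ell$ (so $\ell\ge 4$), and let $t$ be an odd integer with $1\le t<\ell$. Let $A\cup B$ be a partition of $V(F)$ with $A\ne\emptyset$ such that every path of length $t$ in $F$ that starts at a vertex of $A$ ends at a vertex of $A$. Then $A=V(F)$.
   Context: A $\Theta$-graph of order $\ell$ ($\ell\ge 4$) is a cycle of length $\ell$ together with one chord (an additional edge joining two non-consecutive vertices of the cycle), on exactly $\ell$ vertices. A path of length $t$ is a path with $t$ edges (and $t+1$ distinct vertices). *)

theory Defs
  imports Main
begin

text \<open>Simple graphs are given by a vertex set V and an edge relation E
(we only use E on vertices of V).\<close>

definition cycle_edge :: "'a list \<Rightarrow> 'a \<Rightarrow> 'a \<Rightarrow> bool" where
  "cycle_edge cyc x y \<longleftrightarrow>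
     (\<exists>i<length cyc. (x = cyc ! i \<and> y = cyc ! ((i + 1) mod length cyc)) \<or>
                     (y = cyc ! i \<and> x = cyc ! ((i + 1) mod length cyc)))"

definition theta_graph :: "'a set \<Rightarrow> ('a \<Rightarrow> 'a \<Rightarrow> bool) \<Rightarrow> nat \<Rightarrow> bool" where
  "theta_graph V E l \<longleftrightarrow> l \<ge> 4 \<and>
     (\<exists>cyc i j. length cyc = l \<and> distinct cyc \<and> set cyc = V \<and>
        i < j \<and> j < l \<and> j \<noteq> i + 1 \<and> \<not> (i = 0 \<and> j = l - 1) \<and>
        (\<forall>x y. E x y \<longleftrightarrow> cycle_edge cyc x y \<or>
                     (x = cyc ! i \<and> y = cyc ! j) \<or> (x = cyc ! j \<and> y = cyc ! i)))"

definition is_path :: "'a set \<Rightarrow> ('a \<Rightarrow> 'a \<Rightarrow> bool) \<Rightarrow> 'a list \<Rightarrow> nat \<Rightarrow> bool" where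
  "is_path V E p t \<longleftrightarrow> length p = t + 1 \<and> distinct p \<and> set p \<subseteq> V \<and>
     (\<forall>k < t. E (p ! k) (p ! (k + 1)))"

end

theory Submission
  imports Defs
begin


definition invar :: "(int \<Rightarrow> 'b) \<Rightarrow> int \<Rightarrow> bool" where
  "invar f k \<longleftrightarrow> (\<forall>x. f x = f (x + k))"

lemma invar_nat: "invar f k \<Longrightarrow> f x = f (x + int n * k)"
proof (induction n arbitrary: x)
  case 0 then show ?case by simp
next
  case (Suc n)
  have "f x = f (x + int n * k)" using Suc by blast
  also have "\<dots> = f (x + int n * k + k)" using Suc.prems unfolding invar_def by blast
  finally show ?case by (simp add: algebra_simps)
qed

lemma invar_mult: "invar f k \<Longrightarrow> invar f (n * k)"
proof -
  assume h: "invar f k"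
  show ?thesis unfolding invar_def
  proof
    fix x
    show "f x = f (x + n * k)"
    proof (cases "n \<ge> 0")
      case True
      then obtain m where "n = int m" using nonneg_int_cases by blast
      then show ?thesis using invar_nat[OF h] by simp
    next
      case False
      define m where "m = nat (- n)"
      have m: "n = - int m" using False unfolding m_def by simp
      have "f (x + n * k) = f (x + n * k + int m * k)" using invar_nat[OF h] by blast
      then show ?thesis using m by (simp add: algebra_simps)
    qed
  qed
qed

lemma invar_add: "invar f a \<Longrightarrow> invar f b \<Longrightarrow> invar f (a + b)"
  unfolding invar_def by (metis add.assoc)

lemma invar_diff: "invar f a \<Longrightarrow> invar f b \<Longrightarrow> invar f (a - b)"
  using invar_add[of f a "(-1) * b"] invar_mult[of f b "-1"] by simp

lemma window:
  fixes Q :: "int \<Rightarrow> bool"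
  assumes "\<forall>x. Q x = Q (x + m)" "m > 0" "\<forall>x. s \<le> x \<and> x < s + m \<longrightarrow> Q x"
  shows "Q x"
proof -
  have iv: "invar Q m" using assms(1) unfolding invar_def by blast
  define r where "r = (x - s) mod m"
  define n where "n = (x - s) div m"
  have x: "x = (s + r) + n * m" unfolding r_def n_def by (simp add: algebra_simps)
  have "Q (s + r)" using assms(3) assms(2) unfolding r_def
    by (simp add: pos_mod_bound pos_mod_sign)
  then show ?thesis using invar_mult[OF iv, of n] x unfolding invar_def by metis
qed

lemma key:
  fixes f :: "int \<Rightarrow> bool" and t l c :: int
  assumes "odd t" "1 \<le> t" "t < l" "2 \<le> c" "c + 2 \<le> l"
    and H0: "invar f t" and Hl: "invar f l"
    and Hpp: "\<forall>a. 0 \<le> a \<and> a < t \<and> a < c \<and> c + (t - 1 - a) < l \<longrightarrow> f a = f (c + t - 1 - a)"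
    and Hmm: "\<forall>a. 0 \<le> a \<and> a < t \<and> t - 1 - a < c \<and> a < l - c \<longrightarrow> f (- a) = f (c - t + 1 + a)"
    and Hpm: "t \<le> c \<longrightarrow> (\<forall>a. 0 \<le> a \<and> a < t \<longrightarrow> f a = f (a + c + 1 - t))"
    and Hmp: "t + c \<le> l \<longrightarrow> (\<forall>a. 0 \<le> a \<and> a < t \<longrightarrow> f (- a) = f (c + t - 1 - a))"
  shows "invar f 1"
proof -
  obtain q where q: "t = 2 * q + 1" using assms(1) by (metis oddE)
  have fin: "invar f 1" if i2: "invar f 2"
  proof -
    have "invar f (t - q * 2)" using invar_diff[OF H0 invar_mult[OF i2]] .
    then show ?thesis using q by simp
  qed
  have fromrefl: "invar f 2" if r1: "\<forall>x. f x = f (c + t - 1 - x)" and r2: "\<forall>x. f x = f (c - t + 1 - x)"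
  proof -
    have "invar f (2 - 2 * t)" unfolding invar_def
    proof
      fix x
      have "f x = f (c + t - 1 - x)" using r1 by blast
      also have "\<dots> = f (c - t + 1 - (c + t - 1 - x))" using r2 by blast
      finally show "f x = f (x + (2 - 2 * t))" by (simp add: algebra_simps)
    qed
    from invar_add[OF this invar_mult[OF H0, of 2]] show ?thesis by simp
  qed
  have reflw: "\<forall>x. f x = f (K - x)" if iv: "invar f m" and m: "m > 0"
      and w: "\<forall>x. s \<le> x \<and> x < s + m \<longrightarrow> f x = f (K - x)" for K m s
  proof
    fix x
    show "f x = f (K - x)"
    proof (rule window[where Q="\<lambda>x. f x = f (K - x)" and m=m and s=s, OF _ m w])
      show "\<forall>x. (f x = f (K - x)) = (f (x + m) = f (K - (x + m)))"
      proof
        fix x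
        have "f (K - (x + m)) = f (K - (x + m) + m)" using iv unfolding invar_def by blast
        moreover have "f x = f (x + m)" using iv unfolding invar_def by blast
        ultimately show "(f x = f (K - x)) = (f (x + m) = f (K - (x + m)))" by simp
      qed
    qed
  qed
  have transw: "invar f K" if w: "\<forall>x. s \<le> x \<and> x < s + t \<longrightarrow> f x = f (x + K)" for K s
    unfolding invar_def
  proof
    fix x
    show "f x = f (x + K)"
    proof (rule window[where Q="\<lambda>x. f x = f (x + K)" and m=t and s=s, OF _ _ w])
      show "\<forall>x. (f x = f (x + K)) = (f (x + t) = f (x + t + K))"
      proof
        fix x
        have "f (x + K) = f (x + K + t)" using H0 unfolding invar_def by blast
        moreover have "f x = f (x + t)" using H0 unfolding invar_def by blast
        ultimately show "(f x = f (x + K)) = (f (x + t) = f (x + t + K))" by (simp add: algebra_simps)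
      qed
    qed (use assms(2) in linarith)
  qed
  consider (A) "t \<le> c" "t + c \<le> l" | (B) "t > c" "t + c > l" | (C) "t \<le> c" "t + c > l"
    | (D) "t > c" "t + c \<le> l" by linarith
  then show ?thesis
  proof cases
    case A
    have i1: "invar f (c + 1 - t)"
      by (rule transw[where s=0]) (use Hpm A in \<open>auto simp: algebra_simps\<close>)
    have i2: "invar f (c + t - 1)"
    proof (rule transw[where s="1 - t"], intro allI impI)
      fix x assume "1 - t \<le> x \<and> x < 1 - t + t"
      then have "f (- (-x)) = f (c + t - 1 - (-x))" using Hmp A by (intro Hmp[rule_format] conjI) linarith+
      then show "f x = f (x + (c + t - 1))" by (simp add: algebra_simps)
    qed
    have "invar f ((c + t - 1) - (c + 1 - t) - 2 * t)"
      using invar_diff[OF invar_diff[OF i2 i1] invar_mult[OF H0, of 2]] by simp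
    then have "invar f (-2)" by (simp add: algebra_simps)
    from invar_mult[OF this, of "-1"] show ?thesis using fin by simp
  next
    case B
    have im: "invar f (l - t)" using invar_diff[OF Hl H0] .
    have r1: "\<forall>x. f x = f (c + t - 1 - x)"
    proof (rule reflw[OF im _, where s="t + c - l"])
      show "\<forall>x. t + c - l \<le> x \<and> x < t + c - l + (l - t) \<longrightarrow> f x = f (c + t - 1 - x)"
        by (intro allI impI Hpp[rule_format] conjI) (use B in linarith)+
    qed (use assms(2-5) B in linarith)
    have r2: "\<forall>x. f x = f (c - t + 1 - x)"
    proof (rule reflw[OF im _, where s="c + 1 - l"])
      show "\<forall>x. c + 1 - l \<le> x \<and> x < c + 1 - l + (l - t) \<longrightarrow> f x = f (c - t + 1 - x)"
      proof (intro allI impI)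
        fix x assume h: "c + 1 - l \<le> x \<and> x < c + 1 - l + (l - t)"
        have "f (- (-x)) = f (c - t + 1 + (-x))" using Hmm h B by (intro Hmm[rule_format] conjI) linarith+
        then show "f x = f (c - t + 1 - x)" by simp
      qed
    qed (use assms(2-5) B in linarith)
    show ?thesis using fin fromrefl r1 r2 by blast
  next
    case C
    have i1: "invar f (c + 1 - t)"
      by (rule transw[where s=0]) (use Hpm C in \<open>auto simp: algebra_simps\<close>)
    have im: "invar f (l - c - 1)" using invar_diff[OF invar_diff[OF Hl i1] H0] by (simp add: algebra_simps)
    have r1: "\<forall>x. f x = f (c + t - 1 - x)"
    proof (rule reflw[OF im _, where s="t + c - l"])
      show "\<forall>x. t + c - l \<le> x \<and> x < t + c - l + (l - c - 1) \<longrightarrow> f x = f (c + t - 1 - x)"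
        by (intro allI impI Hpp[rule_format] conjI) (use C in linarith)+
    qed (use assms(2-5) C in linarith)
    have r2: "\<forall>x. f x = f (c - t + 1 - x)"
    proof (rule reflw[OF im _, where s="c + 1 - l"])
      show "\<forall>x. c + 1 - l \<le> x \<and> x < c + 1 - l + (l - c - 1) \<longrightarrow> f x = f (c - t + 1 - x)"
      proof (intro allI impI)
        fix x assume h: "c + 1 - l \<le> x \<and> x < c + 1 - l + (l - c - 1)"
        have "f (- (-x)) = f (c - t + 1 + (-x))" using Hmm h C by (intro Hmm[rule_format] conjI) linarith+
        then show "f x = f (c - t + 1 - x)" by simp
      qed
    qed (use assms(2-5) C in linarith)
    show ?thesis using fin fromrefl r1 r2 by blast
  next
    case D
    have i2: "invar f (c + t - 1)"
    proof (rule transw[where s="1 - t"], intro allI impI)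
      fix x assume "1 - t \<le> x \<and> x < 1 - t + t"
      then have "f (- (-x)) = f (c + t - 1 - (-x))" using Hmp D by (intro Hmp[rule_format] conjI) linarith+
      then show "f x = f (x + (c + t - 1))" by (simp add: algebra_simps)
    qed
    have im: "invar f (c - 1)" using invar_diff[OF i2 H0] by (simp add: algebra_simps)
    have r1: "\<forall>x. f x = f (c + t - 1 - x)"
    proof (rule reflw[OF im _, where s="0"])
      show "\<forall>x. 0 \<le> x \<and> x < 0 + (c - 1) \<longrightarrow> f x = f (c + t - 1 - x)"
        by (intro allI impI Hpp[rule_format] conjI) (use D in linarith)+
    qed (use assms(2-5) D in linarith)
    have r2: "\<forall>x. f x = f (c - t + 1 - x)"
    proof (rule reflw[OF im _, where s="1 - t"])
      show "\<forall>x. 1 - t \<le> x \<and> x < 1 - t + (c - 1) \<longrightarrow> f x = f (c - t + 1 - x)"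
      proof (intro allI impI)
        fix x assume h: "1 - t \<le> x \<and> x < 1 - t + (c - 1)"
        have "f (- (-x)) = f (c - t + 1 + (-x))" using Hmm h D by (intro Hmm[rule_format] conjI) linarith+
        then show "f x = f (c - t + 1 - x)" by simp
      qed
    qed (use assms(2-5) D in linarith)
    show ?thesis using fin fromrefl r1 r2 by blast
  qed
qed


lemma hd_upto: "a \<le> b \<Longrightarrow> hd [a..b] = a"
  by (subst upto_rec1) auto

lemma last_upto: "a \<le> b \<Longrightarrow> last [a..b] = (b::int)"
  by (subst upto_rec2) auto

lemma succ_upto: "successively (\<lambda>x y. y = x + 1) [a..b]"
  unfolding successively_conv_nth by simp

lemma mod_inj_window:
  fixes y z s L :: int
  assumes "s \<le> y" "y < s + L" "s \<le> z" "z < s + L" "y mod L = z mod L"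
  shows "y = z"
proof -
  have "L dvd (y - z)" using assms(5) by (simp add: mod_eq_dvd_iff)
  then obtain k where k: "y - z = L * k" by blast
  have lt: "\<bar>y - z\<bar> < L" using assms by auto
  have Lp: "L > 0" using assms by auto
  show ?thesis
  proof (rule ccontr)
    assume "y \<noteq> z"
    then have "k \<noteq> 0" using k by auto
    then have "1 \<le> \<bar>k\<bar>" by simp
    then have "L * 1 \<le> L * \<bar>k\<bar>" using Lp by (intro mult_left_mono) auto
    also have "\<dots> = \<bar>y - z\<bar>" using k Lp by (simp add: abs_mult)
    finally show False using lt by simp
  qed
qed

theorem corollary5p1:
  fixes V :: "'a set" and E :: "'a \<Rightarrow> 'a \<Rightarrow> bool" and l t :: nat and A B :: "'a set"
  assumes "theta_graph V E l"
    and "odd t" and "1 \<le> t" and "t < l"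
    and "A \<union> B = V" and "A \<inter> B = {}" and "A \<noteq> {}"
    and "\<forall>p. is_path V E p t \<and> hd p \<in> A \<longrightarrow> last p \<in> A"
  shows "A = V"
proof -
  obtain cyc i j where l4: "l \<ge> 4" and len: "length cyc = l" and dist: "distinct cyc" and setc: "set cyc = V"
    and ij: "i < j" "j < l" "j \<noteq> i + 1" "\<not> (i = 0 \<and> j = l - 1)"
    and Ed: "\<forall>x y. E x y \<longleftrightarrow> cycle_edge cyc x y \<or>
                     (x = cyc ! i \<and> y = cyc ! j) \<or> (x = cyc ! j \<and> y = cyc ! i)"
    using assms(1) unfolding theta_graph_def by blast
  define L where "L = int l"
  define C where "C = int j - int i"
  define T where "T = int t"
  define idx where "idx y = nat ((y + int i) mod L)" for y
  define w where "w y = cyc ! idx y" for y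
  define f where "f y = (w y \<in> A)" for y
  define adj where "adj y z \<longleftrightarrow> z = y + 1 \<or> y = z + 1 \<or> (y mod L = 0 \<and> z mod L = C) \<or> (y mod L = C \<and> z mod L = 0)" for y z
  have Lpos: "L > 0" using l4 L_def by simp
  have C2: "2 \<le> C" "C + 2 \<le> L" using ij l4 unfolding C_def L_def by auto
  have idx_lt: "idx y < l" for y
    unfolding idx_def using Lpos L_def by (simp add: nat_less_iff)
  have wV: "w y \<in> V" for y unfolding w_def using idx_lt[of y] len setc by auto
  have w_eq: "w y = w z \<longleftrightarrow> y mod L = z mod L" for y z
  proof -
    have "w y = w z \<longleftrightarrow> idx y = idx z"
      unfolding w_def using dist len idx_lt by (simp add: nth_eq_iff_index_eq)
    also have "\<dots> \<longleftrightarrow> (y + int i) mod L = (z + int i) mod L"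
      unfolding idx_def using Lpos by (metis eq_nat_nat_iff pos_mod_sign)
    also have "\<dots> \<longleftrightarrow> y mod L = z mod L"
      by (metis add_diff_cancel_right' mod_diff_left_eq mod_add_left_eq)
    finally show ?thesis .
  qed
  have idx_suc: "idx (y + 1) = (idx y + 1) mod l" for y
  proof -
    have "int (idx (y + 1)) = (y + 1 + int i) mod L" unfolding idx_def using Lpos by simp
    also have "\<dots> = ((y + int i) + 1) mod L" by (simp add: ac_simps)
    also have "\<dots> = ((y + int i) mod L + 1) mod L" by (rule mod_add_left_eq[symmetric])
    also have "\<dots> = (int (idx y) + 1) mod L" using Lpos unfolding idx_def by simp
    also have "\<dots> = int ((idx y + 1) mod l)" unfolding L_def by (simp only: of_nat_mod of_nat_add of_nat_1)
    finally show ?thesis by simp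
  qed
  have idx0: "idx y = i" if "y mod L = 0" for y
  proof -
    have "(y + int i) mod L = int i mod L" using that by (metis add.left_neutral mod_add_left_eq)
    then show ?thesis unfolding idx_def using ij L_def by simp
  qed
  have idxC: "idx y = j" if "y mod L = C" for y
  proof -
    have "(y + int i) mod L = (C + int i) mod L" using that by (metis mod_add_left_eq)
    then show ?thesis unfolding idx_def using ij L_def C_def by simp
  qed
  have adjE: "E (w y) (w z)" if "adj y z" for y z
  proof -
    have ce: "cycle_edge cyc (w y) (w (y + 1))" for y
      unfolding cycle_edge_def w_def using idx_lt[of y] len idx_suc[of y] by auto
    have ce2: "cycle_edge cyc (w (y + 1)) (w y)" for y
      unfolding cycle_edge_def w_def using idx_lt[of y] len idx_suc[of y] by auto
    from that show ?thesis unfolding adj_def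
    proof (elim disjE)
      assume "z = y + 1" then show ?thesis using ce Ed by blast
    next
      assume "y = z + 1" then show ?thesis using ce2 Ed by blast
    next
      assume "y mod L = 0 \<and> z mod L = C"
      then show ?thesis using Ed idx0 idxC unfolding w_def by metis
    next
      assume "y mod L = C \<and> z mod L = 0"
      then show ?thesis using Ed idx0 idxC unfolding w_def by metis
    qed
  qed
  have pathf: "f (hd xs) = f (last xs)" if "length xs = t + 1" "distinct xs" "set xs \<subseteq> {s..<s + L}"
     "successively adj xs" for xs s
  proof -
    define p where "p = map w xs"
    have inj: "inj_on w (set xs)"
      unfolding inj_on_def using that(3) w_eq mod_inj_window by (metis atLeastLessThan_iff subsetD)
    have ne: "xs \<noteq> []" using that(1) by auto
    have pp: "is_path V E p t" unfolding is_path_def p_def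
    proof (intro conjI allI impI)
      show "length (map w xs) = t + 1" using that by simp
      show "distinct (map w xs)" using that(2) inj by (simp add: distinct_map)
      show "set (map w xs) \<subseteq> V" using wV by auto
      fix k assume "k < t"
      then have "adj (xs ! k) (xs ! Suc k)" using that(1,4) successively_nth by (metis Suc_eq_plus1 Suc_mono)
      then show "E (map w xs ! k) (map w xs ! (k + 1))" using adjE \<open>k < t\<close> that(1) by simp
    qed
    have pr: "is_path V E (rev p) t" using pp unfolding is_path_def
    proof (intro conjI allI impI)
      fix k assume "k < t" and h: "length p = t + 1 \<and> distinct p \<and> set p \<subseteq> V \<and> (\<forall>k<t. E (p ! k) (p ! (k + 1)))"
      have "E (p ! (t - 1 - k)) (p ! (t - 1 - k + 1))" using h \<open>k < t\<close> by auto
      moreover have "E x y = E y x" for x y using Ed unfolding cycle_edge_def by blast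
      moreover have "rev p ! k = p ! (t - 1 - k + 1)" using h \<open>k < t\<close> by (simp add: rev_nth Suc_diff_Suc)
      moreover have "rev p ! (k + 1) = p ! (t - 1 - k)" using h \<open>k < t\<close> by (simp add: rev_nth)
      ultimately show "E (rev p ! k) (rev p ! (k + 1))" by simp
    qed auto
    have "hd p = w (hd xs)" "last p = w (last xs)" using ne unfolding p_def by (auto simp: hd_map last_map)
    moreover have "hd (rev p) = last p" "last (rev p) = hd p" using ne unfolding p_def by (auto simp: hd_rev last_rev)
    ultimately show ?thesis using assms(8) pp pr unfolding f_def by metis
  qed
  have su: "successively adj [a..b]" for a b
    using succ_upto[of a b] by (rule successively_mono) (auto simp: adj_def)
  have sur: "successively adj (rev [a..b])" for a b
    using succ_upto[of a b] by (simp, rule successively_mono) (auto simp: adj_def)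
  have adj0C: "adj 0 C" "adj L C" using C2 unfolding adj_def by auto
  have lenup: "length [a..b] = nat (b - a + 1)" for a b :: int by simp
  have H0: "invar f T" unfolding invar_def
  proof
    fix x
    have "f (hd [x..x+T]) = f (last [x..x+T])"
      by (rule pathf[where s=x]) (use su assms(4) T_def L_def in auto)
    moreover have "[x..x+T] = x # [x+1..x+T]" by (rule upto_rec1) (simp add: T_def)
    moreover have "[x..x+T] = [x..x+T-1] @ [x+T]" by (rule upto_rec2) (simp add: T_def)
    ultimately show "f x = f (x + T)" by (metis last_snoc list.sel(1))
  qed
  have Hl: "invar f L" unfolding invar_def f_def
  proof
    fix x
    have "w x = w (x + L)" using w_eq by simp
    then show "(w x \<in> A) = (w (x + L) \<in> A)" by simp
  qed
  have fL: "f (L + y) = f y" for y using Hl unfolding invar_def by (metis add.commute)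
  have Hpp: "\<forall>a. 0 \<le> a \<and> a < T \<and> a < C \<and> C + (T - 1 - a) < L \<longrightarrow> f a = f (C + T - 1 - a)"
  proof (intro allI impI)
    fix a assume h: "0 \<le> a \<and> a < T \<and> a < C \<and> C + (T - 1 - a) < L"
    define xs where "xs = rev [0..a] @ [C..C + (T - 1 - a)]"
    have "f (hd xs) = f (last xs)"
    proof (rule pathf[where s=0])
      show "length xs = t + 1" unfolding xs_def using h T_def by simp arith
      show "distinct xs" unfolding xs_def using h by auto
      show "set xs \<subseteq> {0..<0 + L}" unfolding xs_def using h C2 by auto
      show "successively adj xs" unfolding xs_def using h adj0C sur su
        by (auto simp: successively_append_iff last_rev hd_rev hd_upto last_upto)
    qed
    then show "f a = f (C + T - 1 - a)" unfolding xs_def using h by (simp add: hd_rev last_rev hd_upto last_upto algebra_simps)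
  qed
  have Hmm: "\<forall>a. 0 \<le> a \<and> a < T \<and> T - 1 - a < C \<and> a < L - C \<longrightarrow> f (- a) = f (C - T + 1 + a)"
  proof (intro allI impI)
    fix a assume h: "0 \<le> a \<and> a < T \<and> T - 1 - a < C \<and> a < L - C"
    define xs where "xs = [L - a..L] @ rev [C - (T - 1 - a)..C]"
    have "f (hd xs) = f (last xs)"
    proof (rule pathf[where s=1])
      show "length xs = t + 1" unfolding xs_def using h T_def by simp arith
      show "distinct xs" unfolding xs_def using h by auto
      show "set xs \<subseteq> {1..<1 + L}" unfolding xs_def using h C2 by auto
      show "successively adj xs" unfolding xs_def using h adj0C sur su
        by (auto simp: successively_append_iff last_rev hd_rev hd_upto last_upto)
    qed
    then show "f (- a) = f (C - T + 1 + a)" unfolding xs_def using h fL[of "-a"]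
      by (simp add: hd_rev last_rev hd_upto last_upto algebra_simps)
  qed
  have Hpm: "T \<le> C \<longrightarrow> (\<forall>a. 0 \<le> a \<and> a < T \<longrightarrow> f a = f (a + C + 1 - T))"
  proof (intro allI impI)
    fix a assume TC: "T \<le> C" and h: "0 \<le> a \<and> a < T"
    define xs where "xs = rev [0..a] @ rev [C - (T - 1 - a)..C]"
    have "f (hd xs) = f (last xs)"
    proof (rule pathf[where s=0])
      show "length xs = t + 1" unfolding xs_def using h T_def by simp arith
      show "distinct xs" unfolding xs_def using h TC by auto
      show "set xs \<subseteq> {0..<0 + L}" unfolding xs_def using h C2 TC by auto
      show "successively adj xs" unfolding xs_def using h adj0C sur su
        by (auto simp: successively_append_iff last_rev hd_rev hd_upto last_upto)
    qed
    then show "f a = f (a + C + 1 - T)" unfolding xs_def using h TC by (simp add: hd_rev last_rev hd_upto last_upto algebra_simps)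
  qed
  have Hmp: "T + C \<le> L \<longrightarrow> (\<forall>a. 0 \<le> a \<and> a < T \<longrightarrow> f (- a) = f (C + T - 1 - a))"
  proof (intro allI impI)
    fix a assume TC: "T + C \<le> L" and h: "0 \<le> a \<and> a < T"
    define xs where "xs = [L - a..L] @ [C..C + (T - 1 - a)]"
    have "f (hd xs) = f (last xs)"
    proof (rule pathf[where s=C])
      show "length xs = t + 1" unfolding xs_def using h T_def by simp arith
      show "distinct xs" unfolding xs_def using h TC by auto
      show "set xs \<subseteq> {C..<C + L}" unfolding xs_def using h C2 TC by auto
      show "successively adj xs" unfolding xs_def using h adj0C sur su
        by (auto simp: successively_append_iff last_rev hd_rev hd_upto last_upto)
    qed
    then show "f (- a) = f (C + T - 1 - a)" unfolding xs_def using h fL[of "-a"]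
      by (simp add: hd_rev last_rev hd_upto last_upto algebra_simps)
  qed
  have i1: "invar f 1"
    by (rule key[OF _ _ _ C2 H0 Hl Hpp Hmm Hpm Hmp]) (use assms(2,3,4) T_def L_def in auto)
  have fc: "f x = f y" for x y
    using invar_mult[OF i1, of "y - x"] unfolding invar_def by (metis add.commute diff_add_cancel mult_1_right)
  have wk: "w (int k - int i) = cyc ! k" if "k < l" for k
    unfolding w_def idx_def using that L_def by simp
  obtain a where aA: "a \<in> A" using assms(7) by blast
  then have "a \<in> V" using assms(5) by blast
  then obtain k where k: "k < l" "cyc ! k = a" using setc len by (metis in_set_conv_nth)
  have fk: "f (int k - int i)" unfolding f_def using wk k aA by simp
  have "V \<subseteq> A"
  proof
    fix v assume "v \<in> V"
    then obtain k' where k': "k' < l" "cyc ! k' = v" using setc len by (metis in_set_conv_nth)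
    have "f (int k' - int i)" using fk fc by blast
    then show "v \<in> A" unfolding f_def using wk k' by simp
  qed
  then show ?thesis using assms(5) by blast
qed

end
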